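(* Fix $0<p<1$. For a random fan $\Sigma$ chosen with respect to $T(h,p)$, with high probability $X(\Sigma)$ is singular.
   Context: A ray is a half-line $\rho=\mathbb{R}_{\ge 0}v\subset\mathbb{R}^2$ with $v\in\mathbb{Z}^2\setminus\{0\}$; $u_\rho$ denotes its primitive lattice generator. On $\mathbb{Z}^2$ use the norm $|(x,y)|=\max\{|x|,|y|\}$, and $|\rho|=|u_\rho|$. The completion of a finite set $S$ of rays is the fan with ray set $S$ that is maximal under inclusion among fans with ray set $S$ (its $2$-dimensional cones are spanned by angularly consecutive rays of $S$ at angle less than $\pi$). $T(h,p)$ is the distribution on fans obtained by including each ray $\rho$ with $|\rho|\le h$ independently with probability $p$ and completing. $X(\Sigma)$ is the toric surface of $\Sigma$; it is singular iff some $2$-dimensional cone spanned by rays $\rho,\tau$ has $|\det(u_\rho,u_\tau)|>1$. "With high probability" means with probability tending to $1$ as $h\to\infty$. *)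

theory Defs
  imports "HOL-Probability.Probability"
begin

text \<open>Rays are represented by their primitive generators u = (x,y) in Z^2,
  i.e. gcd x y = 1 (this excludes (0,0)).\<close>

definition primitive :: "int \<times> int \<Rightarrow> bool" where
  "primitive v \<longleftrightarrow> gcd (fst v) (snd v) = 1"

definition lnorm :: "int \<times> int \<Rightarrow> int" where
  "lnorm v = max \<bar>fst v\<bar> \<bar>snd v\<bar>"

definition det2 :: "int \<times> int \<Rightarrow> int \<times> int \<Rightarrow> int" where
  "det2 u w = fst u * snd w - snd u * fst w"

definition rays_upto :: "nat \<Rightarrow> (int \<times> int) set" where
  "rays_upto h = {v. primitive v \<and> lnorm v \<le> int h}"

text \<open>2-dimensional cones of the completion of a ray set S: rays u, w in S
  with w the angularly next ray after u (counterclockwise) and angle from u to w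
  less than pi (det u w > 0), i.e. no ray of S lies strictly inside the cone.\<close>
definition completion_cone :: "(int \<times> int) set \<Rightarrow> int \<times> int \<Rightarrow> int \<times> int \<Rightarrow> bool" where
  "completion_cone S u w \<longleftrightarrow> u \<in> S \<and> w \<in> S \<and> det2 u w > 0 \<and>
     \<not> (\<exists>v\<in>S. det2 u v > 0 \<and> det2 v w > 0)"

text \<open>The toric surface of the completion of S is singular.\<close>
definition singular_completion :: "(int \<times> int) set \<Rightarrow> bool" where
  "singular_completion S \<longleftrightarrow> (\<exists>u w. completion_cone S u w \<and> \<bar>det2 u w\<bar> > 1)"

definition ray_selection :: "nat \<Rightarrow> real \<Rightarrow> (int \<times> int \<Rightarrow> bool) pmf" where
  "ray_selection h p = Pi_pmf (rays_upto h) False (\<lambda>_. bernoulli_pmf p)"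

definition prob_singular :: "nat \<Rightarrow> real \<Rightarrow> real" where
  "prob_singular h p = measure_pmf.prob (ray_selection h p)
     {f. singular_completion {v \<in> rays_upto h. f v}}"

end

theory Submission
  imports Defs
begin
lemma Pi_insert_measure:
  assumes "finite A" "x \<notin> A" "0 \<le> p" "p \<le> 1"
  shows "measure_pmf.prob (Pi_pmf (insert x A) d (\<lambda>_. bernoulli_pmf p)) E =
    p * measure_pmf.prob (Pi_pmf A d (\<lambda>_. bernoulli_pmf p)) {f. f(x:=True) \<in> E}
    + (1-p) * measure_pmf.prob (Pi_pmf A d (\<lambda>_. bernoulli_pmf p)) {f. f(x:=False) \<in> E}"
proof -
  let ?P = "Pi_pmf A d (\<lambda>_. bernoulli_pmf p)"
  have eq: "Pi_pmf (insert x A) d (\<lambda>_. bernoulli_pmf p) =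
     bind_pmf (bernoulli_pmf p) (\<lambda>y. map_pmf (\<lambda>f. f(x:=y)) ?P)"
    using assms by (subst Pi_pmf_insert') (simp_all add: map_pmf_def)
  have "emeasure (measure_pmf (Pi_pmf (insert x A) d (\<lambda>_. bernoulli_pmf p))) E =
     emeasure (measure_pmf (map_pmf (\<lambda>f. f(x:=True)) ?P)) E * ennreal p +
     emeasure (measure_pmf (map_pmf (\<lambda>f. f(x:=False)) ?P)) E * ennreal (1 - p)"
    unfolding eq using assms by simp
  also have "\<dots> = ennreal (p * measure_pmf.prob ?P {f. f(x:=True) \<in> E}
    + (1-p) * measure_pmf.prob ?P {f. f(x:=False) \<in> E})"
    using assms by (simp add: measure_pmf.emeasure_eq_measure vimage_def ennreal_mult'' ennreal_plus mult.commute)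
  finally have "ennreal (measure_pmf.prob (Pi_pmf (insert x A) d (\<lambda>_. bernoulli_pmf p)) E) = ennreal (p * measure_pmf.prob ?P {f. f(x:=True) \<in> E}
    + (1-p) * measure_pmf.prob ?P {f. f(x:=False) \<in> E})"
    by (simp add: measure_pmf.emeasure_eq_measure del: ennreal_plus)
  then show ?thesis using assms
    by (subst (asm) ennreal_inj) auto
qed

lemma blocks_prob:
  fixes a b c :: "nat \<Rightarrow> 'a"
  assumes p: "0 \<le> p" "p \<le> 1"
  shows "finite R \<Longrightarrow> (\<forall>i<K. a i \<in> R \<and> b i \<in> R \<and> c i \<in> R) \<Longrightarrow>
    (\<forall>i<K. a i \<noteq> b i \<and> a i \<noteq> c i \<and> b i \<noteq> c i) \<Longrightarrow>
    (\<forall>i<K. \<forall>j<K. i \<noteq> j \<longrightarrow> {a i, b i, c i} \<inter> {a j, b j, c j} = {}) \<Longrightarrow>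
    measure_pmf.prob (Pi_pmf R False (\<lambda>_. bernoulli_pmf p))
      {f. \<forall>i<K. \<not>(f (a i) \<and> f (b i) \<and> \<not> f (c i))} = (1 - p*p*(1-p))^K"
proof (induction K arbitrary: R)
  case 0
  then show ?case by simp
next
  case (Suc K)
  define R' where "R' = R - {a K, b K, c K}"
  have RR: "R = insert (a K) (insert (b K) (insert (c K) R'))"
    using Suc.prems(2) unfolding R'_def by auto
  have finR': "finite R'" using Suc.prems(1) unfolding R'_def by auto
  have IH: "measure_pmf.prob (Pi_pmf R' False (\<lambda>_. bernoulli_pmf p))
      {f. \<forall>i<K. \<not>(f (a i) \<and> f (b i) \<and> \<not> f (c i))} = (1 - p*p*(1-p))^K"
  proof (rule Suc.IH[OF finR'])
    show "\<forall>i<K. a i \<in> R' \<and> b i \<in> R' \<and> c i \<in> R'"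
    proof (intro allI impI)
      fix i assume i: "i < K"
      then have "{a i, b i, c i} \<inter> {a K, b K, c K} = {}" using Suc.prems(4) by auto
      then show "a i \<in> R' \<and> b i \<in> R' \<and> c i \<in> R'" using Suc.prems(2) i unfolding R'_def by auto
    qed
  qed (use Suc.prems in auto)
  define E where "E = {f. \<forall>i<Suc K. \<not>(f (a i) \<and> f (b i) \<and> \<not> f (c i))}"
  define E' where "E' = {f::'a\<Rightarrow>bool. \<forall>i<K. \<not>(f (a i) \<and> f (b i) \<and> \<not> f (c i))}"
  have key: "{f. f(c K:=y3, b K:=y2, a K:=y1) \<in> E} = (if y1 \<and> y2 \<and> \<not>y3 then {} else E')" for y1 y2 y3
  proof -
    have d: "\<And>i. i < K \<Longrightarrow> {a i, b i, c i} \<inter> {a K, b K, c K} = {}" using Suc.prems(4) by auto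
    have n: "a K \<noteq> b K" "a K \<noteq> c K" "b K \<noteq> c K" using Suc.prems(3) by auto
    show ?thesis
    proof (cases "y1 \<and> y2 \<and> \<not>y3")
      case True
      then show ?thesis using n by (auto simp: less_Suc_eq E_def)
    next
      case False
      have "f(c K:=y3, b K:=y2, a K:=y1) \<in> E \<longleftrightarrow> f \<in> E'" for f
      proof -
        have "\<And>i. i < K \<Longrightarrow> (f(c K:=y3, b K:=y2, a K:=y1)) (a i) = f (a i) \<and>
              (f(c K:=y3, b K:=y2, a K:=y1)) (b i) = f (b i) \<and> (f(c K:=y3, b K:=y2, a K:=y1)) (c i) = f (c i)"
          using d by fastforce
        then show ?thesis using False n by (auto simp: less_Suc_eq E_def E'_def)
      qed
      then show ?thesis using False by auto
    qed
  qed
  have key': "{h. h(c K:=y3) \<in> {g. g(b K:=y2) \<in> {f. f(a K:=y1) \<in> E}}} = (if y1 \<and> y2 \<and> \<not>y3 then {} else E')" for y1 y2 y3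
    unfolding mem_Collect_eq by (rule key)
  have nin: "c K \<notin> R'" "b K \<notin> insert (c K) R'" "a K \<notin> insert (b K) (insert (c K) R')"
    using Suc.prems(3) unfolding R'_def by auto
  have fins: "finite (insert (c K) R')" "finite (insert (b K) (insert (c K) R'))" using finR' by auto
  have "measure_pmf.prob (Pi_pmf R False (\<lambda>_. bernoulli_pmf p)) E =
     (1 - p*p*(1-p)) * measure_pmf.prob (Pi_pmf R' False (\<lambda>_. bernoulli_pmf p)) E'"
    unfolding RR
    apply (simp only: Pi_insert_measure[OF fins(2) nin(3) p] Pi_insert_measure[OF fins(1) nin(2) p]
       Pi_insert_measure[OF finR' nin(1) p] key')
    apply (simp add: algebra_simps)
    done
  then show ?case using IH unfolding E_def E'_def by simp
qed

lemma inside_block: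
  fixes x y t :: int
  assumes "2*(t-2) \<ge> int h" "t \<ge> 3" "\<bar>x\<bar> \<le> int h" "t*y - x > 0" "x - y*(t-2) > 0"
  shows "x = t - 1 \<and> y = 1"
proof -
  have "t*y - y*(t-2) = 2*y" by (simp add: algebra_simps)
  then have y1: "y \<ge> 1" using assms by linarith
  have "y = 1"
  proof (rule ccontr)
    assume "y \<noteq> 1"
    then have "y \<ge> 2" using y1 by simp
    then have "y*(t-2) \<ge> 2*(t-2)" using assms(2) by (intro mult_right_mono) auto
    then show False using assms by linarith
  qed
  then show ?thesis using assms by auto
qed

lemma sing_block:
  fixes t :: int
  assumes "2*(t-2) \<ge> int h" "t \<le> int h" "t \<ge> 3" "f (t,1)" "f (t-2,1)" "\<not> f (t-1,1)"
  shows "singular_completion {v \<in> rays_upto h. f v}"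
proof -
  let ?S = "{v \<in> rays_upto h. f v}"
  have inr: "(s, 1) \<in> rays_upto h" if "1 \<le> s" "s \<le> int h" for s :: int
    using that by (auto simp: rays_upto_def primitive_def lnorm_def)
  have u: "(t,1) \<in> ?S" "(t-2,1) \<in> ?S" using assms inr by auto
  have "completion_cone ?S (t,1) (t-2,1)"
    unfolding completion_cone_def
  proof (intro conjI)
    show "det2 (t, 1) (t - 2, 1) > 0" by (simp add: det2_def)
    show "\<not> (\<exists>v\<in>?S. det2 (t, 1) v > 0 \<and> det2 v (t - 2, 1) > 0)"
    proof
      assume "\<exists>v\<in>?S. det2 (t, 1) v > 0 \<and> det2 v (t - 2, 1) > 0"
      then obtain x y where v: "(x,y) \<in> ?S" "t*y - x > 0" "x - y*(t-2) > 0"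
        by (auto simp: det2_def)
      have "\<bar>x\<bar> \<le> int h" using v(1) by (auto simp: rays_upto_def lnorm_def)
      then have "x = t - 1 \<and> y = 1" using inside_block[OF assms(1,3)] v by blast
      then show False using v(1) assms(6) by auto
    qed
  qed (use u in auto)
  moreover have "\<bar>det2 (t,1) (t-2,1)\<bar> > 1" by (simp add: det2_def)
  ultimately show ?thesis unfolding singular_completion_def by blast
qed

lemma finite_rays: "finite (rays_upto h)"
proof -
  have "rays_upto h \<subseteq> {-int h..int h} \<times> {-int h..int h}"
    by (auto simp: rays_upto_def lnorm_def)
  then show ?thesis by (rule finite_subset) auto
qed

lemma prob_bound:
  assumes p: "0 < p" "p < 1"
  shows "prob_singular h p \<ge> 1 - (1 - p*p*(1-p)) ^ (h div 6)"
proof -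
  define K where "K = h div 6"
  define t where "t = (\<lambda>i::nat. int h - 3 * int i)"
  define a where "a = (\<lambda>i. (t i, 1::int))"
  define b where "b = (\<lambda>i. (t i - 2, 1::int))"
  define c where "c = (\<lambda>i. (t i - 1, 1::int))"
  have tb: "2*(t i - 2) \<ge> int h" "t i \<le> int h" "t i \<ge> 3" if "i < K" for i
    using that unfolding t_def K_def by auto
  have inr: "(s, 1) \<in> rays_upto h" if "1 \<le> s" "s \<le> int h" for s :: int
    using that by (auto simp: rays_upto_def primitive_def lnorm_def)
  let ?M = "ray_selection h p"
  define E where "E = {f. \<forall>i<K. \<not>(f (a i) \<and> f (b i) \<and> \<not> f (c i))}"
  have PE: "measure_pmf.prob ?M E = (1 - p*p*(1-p))^K"
    unfolding ray_selection_def E_def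
  proof (rule blocks_prob)
    show "\<forall>i<K. a i \<in> rays_upto h \<and> b i \<in> rays_upto h \<and> c i \<in> rays_upto h"
    proof (intro allI impI)
      fix i assume i: "i < K"
      show "a i \<in> rays_upto h \<and> b i \<in> rays_upto h \<and> c i \<in> rays_upto h"
        unfolding a_def b_def c_def using inr tb[OF i] by simp
    qed
    show "\<forall>i<K. \<forall>j<K. i \<noteq> j \<longrightarrow> {a i, b i, c i} \<inter> {a j, b j, c j} = {}"
      unfolding a_def b_def c_def t_def by auto
  qed (use p finite_rays in \<open>auto simp: a_def b_def c_def\<close>)
  have sub: "UNIV - E \<subseteq> {f. singular_completion {v \<in> rays_upto h. f v}}"
  proof
    fix f assume "f \<in> UNIV - E"
    then obtain i where "i < K" "f (a i)" "f (b i)" "\<not> f (c i)" unfolding E_def by auto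
    then show "f \<in> {f. singular_completion {v \<in> rays_upto h. f v}}"
      using sing_block[OF tb[of i]] unfolding a_def b_def c_def by auto
  qed
  have eq: "measure_pmf.prob ?M (UNIV - E) = 1 - measure_pmf.prob ?M E"
    using measure_pmf.prob_compl[of E "ray_selection h p"] by simp
  have le: "measure_pmf.prob ?M (UNIV - E) \<le> prob_singular h p"
    unfolding prob_singular_def using sub by (intro measure_pmf.finite_measure_mono) auto
  show ?thesis using eq le PE K_def by simp
qed

theorem mainTheorem2:
  fixes p :: real
  assumes "0 < p" and "p < 1"
  shows "(\<lambda>h. prob_singular h p) \<longlonglongrightarrow> 1"
proof -
  define r where "r = 1 - p*p*(1-p)"
  have q: "p*p*(1-p) > 0" using assms by simp
  have q1: "p*p*(1-p) \<le> 1"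
  proof -
    have "p*p \<le> 1" using assms by (simp add: mult_le_one)
    moreover have "1 - p \<le> 1" using assms by simp
    ultimately show ?thesis using assms by (simp add: mult_le_one)
  qed
  have r: "0 \<le> r" "r < 1" using q q1 unfolding r_def by auto
  have lim0: "(\<lambda>n. r ^ n) \<longlonglongrightarrow> 0" using r by (intro LIMSEQ_power_zero) auto
  have div: "filterlim (\<lambda>h::nat. h div 6) at_top sequentially"
    unfolding filterlim_at_top eventually_sequentially
  proof (intro allI)
    fix Z :: nat
    show "\<exists>N. \<forall>n\<ge>N. Z \<le> n div 6"
      by (rule exI[of _ "6 * Z"]) auto
  qed
  have lim: "(\<lambda>h. r ^ (h div 6)) \<longlonglongrightarrow> 0" by (rule filterlim_compose[OF lim0 div])
  then have lim1: "(\<lambda>h. 1 - r ^ (h div 6)) \<longlonglongrightarrow> 1"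
    using tendsto_diff[OF tendsto_const[of 1] lim] by simp
  show ?thesis
  proof (rule tendsto_sandwich[OF _ _ lim1 tendsto_const])
    show "\<forall>\<^sub>F h in sequentially. 1 - r ^ (h div 6) \<le> prob_singular h p"
      using prob_bound[OF assms] unfolding r_def by auto
    show "\<forall>\<^sub>F h in sequentially. prob_singular h p \<le> 1"
      unfolding prob_singular_def by auto
  qed
qed
end
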